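(* Let $\Phi_D$ be a set of BS indices containing $0$, $\Psi_D=\Phi_D\setminus\{0\}$ (sums assumed convergent), $K\ge1$, $\tau_c$, $\tau_p$ with $K\le\tau_p\le\tau_c$, and positive numbers $p_{l'i},q_{l'i},\beta_{0l'i}$ ($l'\in\Phi_D$, $i=1,\dots,K$), $\sigma^2$, $B_W$; fix $k$. For $M\ge1$ define the closed-form rates $$R^{rp}_{0k}(M)=B_W\Big(1-\frac{\tau_p}{\tau_c}\Big)\log_2\!\Big(1+\frac{Mp_{0k}\beta_{00k}}{\frac{M}{\tau_p}\sum_{l'\in\Psi_D}\sum_{i=1}^K\frac{p_{l'i}q_{l'i}}{q_{0k}}\frac{\beta_{0l'i}^2}{\beta_{00k}}+\frac{1}{\gamma^{rp}_{0k}}(\sum_{l'\in\Phi_D}\sum_{i=1}^Kp_{l'i}\beta_{0l'i}+\sigma^2)}\Big),$$ $\gamma^{rp}_{0k}=\frac{q_{0k}\tau_p\beta_{00k}}{q_{0k}\tau_p\beta_{00k}+\sum_{l'\in\Psi_D}\sum_iq_{l'i}\beta_{0l'i}+\sigma^2}$; $R^{sp}_{0k}(M)=B_W\log_2(1+Mp_{0k}\beta_{00k}/\mathcal I^{sp}(M))$ with $$\mathcal I^{sp}(M)=\frac{M}{\tau_c}\sum_{l'\in\Psi_D}\sum_{i=1}^K\frac{(p_{l'i}+(1-\frac1{\tau_c})q_{l'i})q_{l'i}}{q_{0k}}\frac{\beta_{0l'i}^2}{\beta_{00k}}+\frac{M}{\tau_c}\sum_{l'\in\Phi_D}\sum_{i=1}^K\frac{(p_{l'i}+q_{l'i})p_{l'i}}{q_{0k}}\frac{\beta_{0l'i}^2}{\beta_{00k}}+\frac{2}{\tau_c}p_{0k}\beta_{00k}+\frac{2}{\tau_c^2}\sum_{l'\in\Psi_D}\sum_{i=1}^K\frac{q_{l'i}p_{l'i}}{q_{0k}}\frac{\beta_{0l'i}^2}{\beta_{00k}}+\frac{1}{\tau_c^2}\sum_{l'\in\Phi_D}\sum_{i=1}^K\frac{p_{l'i}^2}{q_{0k}}\frac{\beta_{0l'i}^2}{\beta_{00k}}+\frac{1}{\gamma^{sp}_{0k}}\Big(\sum_{l'\in\Phi_D}\sum_{i=1}^K(q_{l'i}+p_{l'i})\beta_{0l'i}+\sigma^2\Big),$$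 and $R^{sp\text{-}ub}_{0k}(M)=B_W\log_2(1+Mp_{0k}\beta_{00k}/\mathcal I^{sp\text{-}ub}(M))$ with $$\mathcal I^{sp\text{-}ub}(M)=\frac{M}{\tau_c}\sum_{l'\in\Psi_D}\sum_{i=1}^K\frac{p_{l'i}q_{l'i}}{q_{0k}}\frac{\beta_{0l'i}^2}{\beta_{00k}}+\frac{M}{\tau_c}\sum_{l'\in\Phi_D}\sum_{i=1}^K\frac{p_{l'i}^2}{q_{0k}}\frac{\beta_{0l'i}^2}{\beta_{00k}}+\frac{1}{\tau_c^2}\sum_{l'\in\Phi_D}\sum_{i=1}^K\frac{p_{l'i}^2}{q_{0k}}\frac{\beta_{0l'i}^2}{\beta_{00k}}+\frac{1}{\gamma^{sp}_{0k}}\Big(\sum_{l'\in\Phi_D}\sum_{i=1}^Kp_{l'i}\beta_{0l'i}+\sigma^2\Big),$$ where $\gamma^{sp}_{0k}=\frac{q_{0k}\tau_c\beta_{00k}}{q_{0k}\tau_c\beta_{00k}+\sum_{l'\in\Psi_D}\sum_iq_{l'i}\beta_{0l'i}+\sum_{l'\in\Phi_D}\sum_ip_{l'i}\beta_{0l'i}+\sigma^2}$. Then, as $M\to\infty$, $$R^{rp}_{0k}(M)\to R^{a\text{-}rp}_{0k}=\Big(1-\frac{\tau_p}{\tau_c}\Big)B_W\log_2\!\Big(1+\frac{p_{0k}\beta_{00k}}{\frac1{\tau_p}\sum_{l'\in\Psi_D}\sum_{i=1}^K\frac{p_{l'i}q_{l'i}}{q_{0k}}\frac{\beta_{0l'i}^2}{\beta_{00k}}}\Big),$$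 $$R^{sp}_{0k}(M)\to R^{a\text{-}sp}_{0k}=B_W\log_2\!\Big(1+\frac{p_{0k}\beta_{00k}}{\frac1{\tau_c}\sum_{l'\in\Psi_D}\sum_{i=1}^K\frac{(p_{l'i}+(1-\frac1{\tau_c})q_{l'i})q_{l'i}}{q_{0k}}\frac{\beta_{0l'i}^2}{\beta_{00k}}+\frac1{\tau_c}\sum_{l'\in\Phi_D}\sum_{i=1}^K\frac{(p_{l'i}+q_{l'i})p_{l'i}}{q_{0k}}\frac{\beta_{0l'i}^2}{\beta_{00k}}}\Big),$$ and $$R^{a\text{-}sp}_{0k}\le B_W\log_2\!\Big(1+\frac{p_{0k}\beta_{00k}}{\frac1{\tau_c}\sum_{l'\in\Psi_D}\sum_{i=1}^K\frac{p_{l'i}q_{l'i}}{q_{0k}}\frac{\beta_{0l'i}^2}{\beta_{00k}}+\frac1{\tau_c}\sum_{l'\in\Phi_D}\sum_{i=1}^K\frac{p_{l'i}^2}{q_{0k}}\frac{\beta_{0l'i}^2}{\beta_{00k}}}\Big),$$ the latter being $\lim_{M\to\infty}R^{sp\text{-}ub}_{0k}(M)$.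
   Context: $R^{rp}_{0k}$, $R^{sp}_{0k}$, $R^{sp\text{-}ub}_{0k}$ are the closed-form ergodic achievable rates of user $k$ in cell $0$ of a multicell massive MIMO uplink with $M$ BS antennas per cell and maximum ratio combining, using respectively regular pilots of length $\tau_p$, superimposed pilots over the whole coherence block of $\tau_c$ samples, and superimposed pilots with perfect pilot subtraction; $p_{l'i},q_{l'i}$ are data and pilot powers of user $i$ in cell $l'$ and $\beta_{0l'i}$ its large-scale fading to BS $0$. *)

theory Defs
  imports "HOL-Analysis.Analysis"
begin

text \<open>BS indices are naturals; Phi is the set of BS indices (possibly infinite),
  users are 1..K.  p l i, q l i are data/pilot powers of user i in cell l,
  beta l i stands for beta_{0 l i} (large-scale fading to BS 0).\<close>

definition dsum :: "nat set \<Rightarrow> nat \<Rightarrow> (nat \<Rightarrow> nat \<Rightarrow> real) \<Rightarrow> real" where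
  "dsum A K f = (\<Sum>\<^sub>\<infinity>l\<in>A. \<Sum>i=1..K. f l i)"

definition gamma_rp :: "nat set \<Rightarrow> nat \<Rightarrow> nat \<Rightarrow> (nat \<Rightarrow> nat \<Rightarrow> real) \<Rightarrow> (nat \<Rightarrow> nat \<Rightarrow> real) \<Rightarrow> real \<Rightarrow> nat \<Rightarrow> real" where
  "gamma_rp Phi K taup q beta sigma2 k =
     q 0 k * real taup * beta 0 k /
     (q 0 k * real taup * beta 0 k + dsum (Phi - {0}) K (\<lambda>l i. q l i * beta l i) + sigma2)"

definition gamma_sp :: "nat set \<Rightarrow> nat \<Rightarrow> nat \<Rightarrow> (nat \<Rightarrow> nat \<Rightarrow> real) \<Rightarrow> (nat \<Rightarrow> nat \<Rightarrow> real) \<Rightarrow> (nat \<Rightarrow> nat \<Rightarrow> real) \<Rightarrow> real \<Rightarrow> nat \<Rightarrow> real" where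
  "gamma_sp Phi K tauc p q beta sigma2 k =
     q 0 k * real tauc * beta 0 k /
     (q 0 k * real tauc * beta 0 k + dsum (Phi - {0}) K (\<lambda>l i. q l i * beta l i)
       + dsum Phi K (\<lambda>l i. p l i * beta l i) + sigma2)"

definition R_rp :: "nat set \<Rightarrow> nat \<Rightarrow> nat \<Rightarrow> nat \<Rightarrow> (nat \<Rightarrow> nat \<Rightarrow> real) \<Rightarrow> (nat \<Rightarrow> nat \<Rightarrow> real) \<Rightarrow> (nat \<Rightarrow> nat \<Rightarrow> real) \<Rightarrow> real \<Rightarrow> real \<Rightarrow> nat \<Rightarrow> nat \<Rightarrow> real" where
  "R_rp Phi K taup tauc p q beta sigma2 BW k M =
     BW * (1 - real taup / real tauc) *
     log 2 (1 + real M * p 0 k * beta 0 k /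
       (real M / real taup * dsum (Phi - {0}) K (\<lambda>l i. p l i * q l i / q 0 k * beta l i ^ 2 / beta 0 k)
        + 1 / gamma_rp Phi K taup q beta sigma2 k * (dsum Phi K (\<lambda>l i. p l i * beta l i) + sigma2)))"

definition I_sp :: "nat set \<Rightarrow> nat \<Rightarrow> nat \<Rightarrow> (nat \<Rightarrow> nat \<Rightarrow> real) \<Rightarrow> (nat \<Rightarrow> nat \<Rightarrow> real) \<Rightarrow> (nat \<Rightarrow> nat \<Rightarrow> real) \<Rightarrow> real \<Rightarrow> nat \<Rightarrow> nat \<Rightarrow> real" where
  "I_sp Phi K tauc p q beta sigma2 k M =
     real M / real tauc * dsum (Phi - {0}) K
        (\<lambda>l i. (p l i + (1 - 1 / real tauc) * q l i) * q l i / q 0 k * beta l i ^ 2 / beta 0 k)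
   + real M / real tauc * dsum Phi K (\<lambda>l i. (p l i + q l i) * p l i / q 0 k * beta l i ^ 2 / beta 0 k)
   + 2 / real tauc * p 0 k * beta 0 k
   + 2 / real tauc ^ 2 * dsum (Phi - {0}) K (\<lambda>l i. q l i * p l i / q 0 k * beta l i ^ 2 / beta 0 k)
   + 1 / real tauc ^ 2 * dsum Phi K (\<lambda>l i. p l i ^ 2 / q 0 k * beta l i ^ 2 / beta 0 k)
   + 1 / gamma_sp Phi K tauc p q beta sigma2 k *
       (dsum Phi K (\<lambda>l i. (q l i + p l i) * beta l i) + sigma2)"

definition R_sp :: "nat set \<Rightarrow> nat \<Rightarrow> nat \<Rightarrow> (nat \<Rightarrow> nat \<Rightarrow> real) \<Rightarrow> (nat \<Rightarrow> nat \<Rightarrow> real) \<Rightarrow> (nat \<Rightarrow> nat \<Rightarrow> real) \<Rightarrow> real \<Rightarrow> real \<Rightarrow> nat \<Rightarrow> nat \<Rightarrow> real" where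
  "R_sp Phi K tauc p q beta sigma2 BW k M =
     BW * log 2 (1 + real M * p 0 k * beta 0 k / I_sp Phi K tauc p q beta sigma2 k M)"

definition I_spub :: "nat set \<Rightarrow> nat \<Rightarrow> nat \<Rightarrow> (nat \<Rightarrow> nat \<Rightarrow> real) \<Rightarrow> (nat \<Rightarrow> nat \<Rightarrow> real) \<Rightarrow> (nat \<Rightarrow> nat \<Rightarrow> real) \<Rightarrow> real \<Rightarrow> nat \<Rightarrow> nat \<Rightarrow> real" where
  "I_spub Phi K tauc p q beta sigma2 k M =
     real M / real tauc * dsum (Phi - {0}) K (\<lambda>l i. p l i * q l i / q 0 k * beta l i ^ 2 / beta 0 k)
   + real M / real tauc * dsum Phi K (\<lambda>l i. p l i ^ 2 / q 0 k * beta l i ^ 2 / beta 0 k)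
   + 1 / real tauc ^ 2 * dsum Phi K (\<lambda>l i. p l i ^ 2 / q 0 k * beta l i ^ 2 / beta 0 k)
   + 1 / gamma_sp Phi K tauc p q beta sigma2 k *
       (dsum Phi K (\<lambda>l i. p l i * beta l i) + sigma2)"

definition R_spub :: "nat set \<Rightarrow> nat \<Rightarrow> nat \<Rightarrow> (nat \<Rightarrow> nat \<Rightarrow> real) \<Rightarrow> (nat \<Rightarrow> nat \<Rightarrow> real) \<Rightarrow> (nat \<Rightarrow> nat \<Rightarrow> real) \<Rightarrow> real \<Rightarrow> real \<Rightarrow> nat \<Rightarrow> nat \<Rightarrow> real" where
  "R_spub Phi K tauc p q beta sigma2 BW k M =
     BW * log 2 (1 + real M * p 0 k * beta 0 k / I_spub Phi K tauc p q beta sigma2 k M)"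

definition Ra_rp :: "nat set \<Rightarrow> nat \<Rightarrow> nat \<Rightarrow> nat \<Rightarrow> (nat \<Rightarrow> nat \<Rightarrow> real) \<Rightarrow> (nat \<Rightarrow> nat \<Rightarrow> real) \<Rightarrow> (nat \<Rightarrow> nat \<Rightarrow> real) \<Rightarrow> real \<Rightarrow> nat \<Rightarrow> real" where
  "Ra_rp Phi K taup tauc p q beta BW k =
     (1 - real taup / real tauc) * BW *
     log 2 (1 + p 0 k * beta 0 k /
       (1 / real taup * dsum (Phi - {0}) K (\<lambda>l i. p l i * q l i / q 0 k * beta l i ^ 2 / beta 0 k)))"

definition Ra_sp :: "nat set \<Rightarrow> nat \<Rightarrow> nat \<Rightarrow> (nat \<Rightarrow> nat \<Rightarrow> real) \<Rightarrow> (nat \<Rightarrow> nat \<Rightarrow> real) \<Rightarrow> (nat \<Rightarrow> nat \<Rightarrow> real) \<Rightarrow> real \<Rightarrow> nat \<Rightarrow> real" where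
  "Ra_sp Phi K tauc p q beta BW k =
     BW * log 2 (1 + p 0 k * beta 0 k /
       (1 / real tauc * dsum (Phi - {0}) K
          (\<lambda>l i. (p l i + (1 - 1 / real tauc) * q l i) * q l i / q 0 k * beta l i ^ 2 / beta 0 k)
        + 1 / real tauc * dsum Phi K (\<lambda>l i. (p l i + q l i) * p l i / q 0 k * beta l i ^ 2 / beta 0 k)))"

definition Ra_spub :: "nat set \<Rightarrow> nat \<Rightarrow> nat \<Rightarrow> (nat \<Rightarrow> nat \<Rightarrow> real) \<Rightarrow> (nat \<Rightarrow> nat \<Rightarrow> real) \<Rightarrow> (nat \<Rightarrow> nat \<Rightarrow> real) \<Rightarrow> real \<Rightarrow> nat \<Rightarrow> real" where
  "Ra_spub Phi K tauc p q beta BW k =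
     BW * log 2 (1 + p 0 k * beta 0 k /
       (1 / real tauc * dsum (Phi - {0}) K (\<lambda>l i. p l i * q l i / q 0 k * beta l i ^ 2 / beta 0 k)
        + 1 / real tauc * dsum Phi K (\<lambda>l i. p l i ^ 2 / q 0 k * beta l i ^ 2 / beta 0 k)))"

end

theory Submission
  imports Defs
begin

lemma lim_log:
  fixes a b c C :: real
  assumes "b > 0" "a \<ge> 0"
  shows "(\<lambda>M::nat. C * log 2 (1 + real M * a / (real M * b + c))) \<longlonglongrightarrow> C * log 2 (1 + a / b)"
proof -
  have "(\<lambda>M::nat. a / (b + c / real M)) \<longlonglongrightarrow> a / (b + 0)"
    by (intro tendsto_intros) (use assms in auto)
  hence 1: "(\<lambda>M::nat. a / (b + c / real M)) \<longlonglongrightarrow> a / b" by simp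
  have 2: "(\<lambda>M::nat. real M * a / (real M * b + c)) \<longlonglongrightarrow> a / b"
  proof (rule Lim_transform_eventually[OF 1])
    show "\<forall>\<^sub>F M in sequentially. a / (b + c / real M) = real M * a / (real M * b + c)"
      using eventually_gt_at_top[of "0::nat"]
      by eventually_elim (auto simp: field_simps)
  qed
  have "1 + a / b > 0" using assms by (simp add: add_pos_nonneg)
  then show ?thesis
    by (intro tendsto_intros 2) auto
qed

lemma summ2:
  assumes "(\<lambda>l. \<Sum>i=1..K. f l i) summable_on A" "(\<lambda>l. \<Sum>i=1..K. g l i) summable_on A"
  shows "(\<lambda>l. \<Sum>i=1..K. a * f l i + b * (g l i::real)) summable_on A"
proof -
  have "(\<lambda>l. a * (\<Sum>i=1..K. f l i) + b * (\<Sum>i=1..K. g l i)) summable_on A"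
    by (intro summable_on_add summable_on_cmult_right assms)
  then show ?thesis by (simp add: sum.distrib sum_distrib_left)
qed

lemma dsum_nonneg:
  assumes "\<And>l i. l \<in> A \<Longrightarrow> i \<in> {1..K} \<Longrightarrow> f l i \<ge> 0"
  shows "dsum A K f \<ge> 0"
  unfolding dsum_def by (intro infsum_nonneg sum_nonneg) (use assms in auto)

lemma dsum_pos:
  assumes "(\<lambda>l. \<Sum>i=1..K. f l i) summable_on A" "x \<in> A" "K \<ge> 1"
    "\<And>l i. l \<in> A \<Longrightarrow> i \<in> {1..K} \<Longrightarrow> f l i > 0"
  shows "dsum A K f > 0"
proof -
  have "0 < (\<Sum>i=1..K. f x i)"
    using assms by (intro sum_pos) auto
  also have "\<dots> = infsum (\<lambda>l. \<Sum>i=1..K. f l i) {x}" by simp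
  also have "\<dots> \<le> infsum (\<lambda>l. \<Sum>i=1..K. f l i) A"
  proof (rule infsum_mono_neutral)
    show "\<And>l. l \<in> A - {x} \<Longrightarrow> 0 \<le> (\<Sum>i=1..K. f l i)"
      using assms(4) by (meson Diff_iff less_imp_le sum_nonneg)
  qed (use assms in auto)
  finally show ?thesis unfolding dsum_def .
qed

lemma dsum_mono:
  assumes "(\<lambda>l. \<Sum>i=1..K. f l i) summable_on A" "(\<lambda>l. \<Sum>i=1..K. g l i) summable_on A"
    "\<And>l i. l \<in> A \<Longrightarrow> i \<in> {1..K} \<Longrightarrow> f l i \<le> g l i"
  shows "dsum A K f \<le> dsum A K g"
  unfolding dsum_def using assms by (intro infsum_mono sum_mono) auto

lemma pos_terms:
  fixes a b c d e f t :: real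
  assumes "a > 0" "b > 0" "c > 0" "d > 0" "e > 0" "t \<ge> 0"
  shows "a * b / d * c ^ 2 / e > 0" "(a + t * b) * b / d * c ^ 2 / e > 0"
    "(a + b) * a / d * c ^ 2 / e > 0" "a ^ 2 / d * c ^ 2 / e > 0"
  using assms by (auto intro!: divide_pos_pos mult_pos_pos add_pos_nonneg mult_nonneg_nonneg)

lemma mono_terms:
  fixes a b c d e t :: real
  assumes "a > 0" "b > 0" "c > 0" "d > 0" "e > 0" "t \<ge> 0"
  shows "a * b / d * c ^ 2 / e \<le> (a + t * b) * b / d * c ^ 2 / e"
    "a ^ 2 / d * c ^ 2 / e \<le> (a + b) * a / d * c ^ 2 / e"
proof -
  have "a * b \<le> (a + t * b) * b" using assms by (simp add: algebra_simps)
  then show "a * b / d * c ^ 2 / e \<le> (a + t * b) * b / d * c ^ 2 / e"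
    using assms by (intro divide_right_mono mult_right_mono) auto
  have "a ^ 2 \<le> (a + b) * a" using assms by (simp add: algebra_simps power2_eq_square)
  then show "a ^ 2 / d * c ^ 2 / e \<le> (a + b) * a / d * c ^ 2 / e"
    using assms by (intro divide_right_mono mult_right_mono) auto
qed

theorem corollary2:
  fixes Phi :: "nat set" and K taup tauc k :: nat
    and p q beta :: "nat \<Rightarrow> nat \<Rightarrow> real" and sigma2 BW :: real
  assumes Phi0: "0 \<in> Phi"
    and Psi_ne: "Phi - {0} \<noteq> {}"
    and K: "1 \<le> K" and Ktaup: "K \<le> taup" and taupc: "taup \<le> tauc"
    and k: "k \<in> {1..K}"
    and pos_p: "\<And>l i. l \<in> Phi \<Longrightarrow> i \<in> {1..K} \<Longrightarrow> p l i > 0"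
    and pos_q: "\<And>l i. l \<in> Phi \<Longrightarrow> i \<in> {1..K} \<Longrightarrow> q l i > 0"
    and pos_beta: "\<And>l i. l \<in> Phi \<Longrightarrow> i \<in> {1..K} \<Longrightarrow> beta l i > 0"
    and sigma2: "sigma2 > 0" and BW: "BW > 0"
    and summ_pb: "(\<lambda>l. \<Sum>i=1..K. p l i * beta l i) summable_on Phi"
    and summ_qb: "(\<lambda>l. \<Sum>i=1..K. q l i * beta l i) summable_on Phi"
    and summ_pqb2: "(\<lambda>l. \<Sum>i=1..K. p l i * q l i * beta l i ^ 2) summable_on Phi"
    and summ_ppb2: "(\<lambda>l. \<Sum>i=1..K. p l i ^ 2 * beta l i ^ 2) summable_on Phi"
    and summ_qqb2: "(\<lambda>l. \<Sum>i=1..K. q l i ^ 2 * beta l i ^ 2) summable_on Phi"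
  shows "(\<lambda>M. R_rp Phi K taup tauc p q beta sigma2 BW k M)
            \<longlonglongrightarrow> Ra_rp Phi K taup tauc p q beta BW k
       \<and> (\<lambda>M. R_sp Phi K tauc p q beta sigma2 BW k M)
            \<longlonglongrightarrow> Ra_sp Phi K tauc p q beta BW k
       \<and> Ra_sp Phi K tauc p q beta BW k \<le> Ra_spub Phi K tauc p q beta BW k
       \<and> (\<lambda>M. R_spub Phi K tauc p q beta sigma2 BW k M)
            \<longlonglongrightarrow> Ra_spub Phi K tauc p q beta BW k"
proof -
  let ?Psi = "Phi - {0}"
  have k1: "k \<in> {1..K}" using k .
  have q0: "q 0 k > 0" and b0: "beta 0 k > 0" and p0: "p 0 k > 0"
    using pos_q pos_beta pos_p Phi0 k by auto
  have tc: "real tauc \<ge> 1" and tp: "real taup \<ge> 1" using K Ktaup taupc by auto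
  define c where "c = 1 / (q 0 k * beta 0 k)"
  have sub: "?Psi \<subseteq> Phi" by auto
  define F1 where "F1 = (\<lambda>l i. p l i * q l i / q 0 k * beta l i ^ 2 / beta 0 k)"
  define F2 where "F2 = (\<lambda>l i. (p l i + (1 - 1 / real tauc) * q l i) * q l i / q 0 k * beta l i ^ 2 / beta 0 k)"
  define F3 where "F3 = (\<lambda>l i. (p l i + q l i) * p l i / q 0 k * beta l i ^ 2 / beta 0 k)"
  define F4 where "F4 = (\<lambda>l i. p l i ^ 2 / q 0 k * beta l i ^ 2 / beta 0 k)"
  have e1: "(\<lambda>l. \<Sum>i=1..K. F1 l i) = (\<lambda>l. \<Sum>i=1..K. c * (p l i * q l i * beta l i ^ 2) + 0 * (p l i * q l i * beta l i ^ 2))"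
    by (intro ext sum.cong) (use q0 b0 in \<open>simp_all add: F1_def c_def field_simps\<close>)
  have e2: "(\<lambda>l. \<Sum>i=1..K. F2 l i) = (\<lambda>l. \<Sum>i=1..K. c * (p l i * q l i * beta l i ^ 2) + (c * (1 - 1 / real tauc)) * (q l i ^ 2 * beta l i ^ 2))"
    by (intro ext sum.cong) (use q0 b0 in \<open>simp_all add: F2_def c_def field_simps power2_eq_square\<close>)
  have e3: "(\<lambda>l. \<Sum>i=1..K. F3 l i) = (\<lambda>l. \<Sum>i=1..K. c * (p l i * q l i * beta l i ^ 2) + c * (p l i ^ 2 * beta l i ^ 2))"
    by (intro ext sum.cong) (use q0 b0 in \<open>simp_all add: F3_def c_def field_simps power2_eq_square\<close>)
  have e4: "(\<lambda>l. \<Sum>i=1..K. F4 l i) = (\<lambda>l. \<Sum>i=1..K. c * (p l i ^ 2 * beta l i ^ 2) + 0 * (p l i ^ 2 * beta l i ^ 2))"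
    by (intro ext sum.cong) (use q0 b0 in \<open>simp_all add: F4_def c_def field_simps\<close>)
  have s1: "(\<lambda>l. \<Sum>i=1..K. F1 l i) summable_on Phi" unfolding e1 by (intro summ2 summ_pqb2)
  have s2: "(\<lambda>l. \<Sum>i=1..K. F2 l i) summable_on Phi" unfolding e2 by (intro summ2 summ_pqb2 summ_qqb2)
  have s3: "(\<lambda>l. \<Sum>i=1..K. F3 l i) summable_on Phi" unfolding e3 by (intro summ2 summ_pqb2 summ_ppb2)
  have s4: "(\<lambda>l. \<Sum>i=1..K. F4 l i) summable_on Phi" unfolding e4 by (intro summ2 summ_ppb2)
  have s1': "(\<lambda>l. \<Sum>i=1..K. F1 l i) summable_on ?Psi" by (rule summable_on_subset[OF s1 sub])
  have s2': "(\<lambda>l. \<Sum>i=1..K. F2 l i) summable_on ?Psi" by (rule summable_on_subset[OF s2 sub])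
  have P: "\<And>l i. l \<in> Phi \<Longrightarrow> i \<in> {1..K} \<Longrightarrow> 0 < p l i \<and> 0 < q l i \<and> 0 < beta l i"
    using pos_p pos_q pos_beta by blast
  obtain x where x: "x \<in> ?Psi" using Psi_ne by blast
  have fac: "1 - 1 / real tauc \<ge> 0" using tc by (simp add: field_simps)
  have D1: "dsum ?Psi K F1 > 0"
  proof (rule dsum_pos[OF s1' x K])
    fix l i assume li: "l \<in> ?Psi" "i \<in> {1..K}"
    then have "0 < p l i" "0 < q l i" "0 < beta l i" using P by auto
    then show "0 < F1 l i" unfolding F1_def using pos_terms(1) q0 b0 fac by blast
  qed
  have D2: "dsum ?Psi K F2 > 0"
  proof (rule dsum_pos[OF s2' x K])
    fix l i assume li: "l \<in> ?Psi" "i \<in> {1..K}"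
    then have "0 < p l i" "0 < q l i" "0 < beta l i" using P by auto
    then show "0 < F2 l i" unfolding F2_def using pos_terms(2) q0 b0 fac by blast
  qed
  have D3: "dsum Phi K F3 > 0"
  proof (rule dsum_pos[OF s3 Phi0 K])
    fix l i assume li: "l \<in> Phi" "i \<in> {1..K}"
    then have "0 < p l i" "0 < q l i" "0 < beta l i" using P by auto
    then show "0 < F3 l i" unfolding F3_def using pos_terms(3) q0 b0 fac by blast
  qed
  have D4: "dsum Phi K F4 > 0"
  proof (rule dsum_pos[OF s4 Phi0 K])
    fix l i assume li: "l \<in> Phi" "i \<in> {1..K}"
    then have "0 < p l i" "0 < q l i" "0 < beta l i" using P by auto
    then show "0 < F4 l i" unfolding F4_def using pos_terms(4) q0 b0 fac by blast
  qed
  have a0: "p 0 k * beta 0 k \<ge> 0" using p0 b0 by simp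
  have L1: "(\<lambda>M. R_rp Phi K taup tauc p q beta sigma2 BW k M) \<longlonglongrightarrow> Ra_rp Phi K taup tauc p q beta BW k"
  proof -
    have "(\<lambda>M::nat. (BW * (1 - real taup / real tauc)) * log 2 (1 + real M * (p 0 k * beta 0 k) /
        (real M * (dsum ?Psi K F1 / real taup) + 1 / gamma_rp Phi K taup q beta sigma2 k * (dsum Phi K (\<lambda>l i. p l i * beta l i) + sigma2))))
      \<longlonglongrightarrow> (BW * (1 - real taup / real tauc)) * log 2 (1 + (p 0 k * beta 0 k) / (dsum ?Psi K F1 / real taup))"
      by (rule lim_log) (use D1 tp a0 in auto)
    then show ?thesis unfolding R_rp_def Ra_rp_def F1_def by (simp add: ac_simps)
  qed
  have L2: "(\<lambda>M. R_sp Phi K tauc p q beta sigma2 BW k M) \<longlonglongrightarrow> Ra_sp Phi K tauc p q beta BW k"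
  proof -
    have "(\<lambda>M::nat. BW * log 2 (1 + real M * (p 0 k * beta 0 k) /
        (real M * (1 / real tauc * dsum ?Psi K F2 + 1 / real tauc * dsum Phi K F3) +
          (2 / real tauc * p 0 k * beta 0 k
           + 2 / real tauc ^ 2 * dsum (Phi - {0}) K (\<lambda>l i. q l i * p l i / q 0 k * beta l i ^ 2 / beta 0 k)
           + 1 / real tauc ^ 2 * dsum Phi K (\<lambda>l i. p l i ^ 2 / q 0 k * beta l i ^ 2 / beta 0 k)
           + 1 / gamma_sp Phi K tauc p q beta sigma2 k *
             (dsum Phi K (\<lambda>l i. (q l i + p l i) * beta l i) + sigma2)))))
      \<longlonglongrightarrow> BW * log 2 (1 + (p 0 k * beta 0 k) / (1 / real tauc * dsum ?Psi K F2 + 1 / real tauc * dsum Phi K F3))"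
      by (rule lim_log) (use D2 D3 tc a0 in \<open>auto intro!: add_pos_pos divide_pos_pos\<close>)
    moreover have "\<And>M. I_sp Phi K tauc p q beta sigma2 k M =
        real M * (1 / real tauc * dsum ?Psi K F2 + 1 / real tauc * dsum Phi K F3) +
          (2 / real tauc * p 0 k * beta 0 k
           + 2 / real tauc ^ 2 * dsum (Phi - {0}) K (\<lambda>l i. q l i * p l i / q 0 k * beta l i ^ 2 / beta 0 k)
           + 1 / real tauc ^ 2 * dsum Phi K (\<lambda>l i. p l i ^ 2 / q 0 k * beta l i ^ 2 / beta 0 k)
           + 1 / gamma_sp Phi K tauc p q beta sigma2 k *
             (dsum Phi K (\<lambda>l i. (q l i + p l i) * beta l i) + sigma2))"
      unfolding I_sp_def F2_def F3_def by (simp add: algebra_simps)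
    ultimately show ?thesis unfolding R_sp_def Ra_sp_def F2_def F3_def by (simp add: ac_simps)
  qed
  have L4: "(\<lambda>M. R_spub Phi K tauc p q beta sigma2 BW k M) \<longlonglongrightarrow> Ra_spub Phi K tauc p q beta BW k"
  proof -
    have "(\<lambda>M::nat. BW * log 2 (1 + real M * (p 0 k * beta 0 k) /
        (real M * (1 / real tauc * dsum ?Psi K F1 + 1 / real tauc * dsum Phi K F4) +
          (1 / real tauc ^ 2 * dsum Phi K (\<lambda>l i. p l i ^ 2 / q 0 k * beta l i ^ 2 / beta 0 k)
           + 1 / gamma_sp Phi K tauc p q beta sigma2 k *
             (dsum Phi K (\<lambda>l i. p l i * beta l i) + sigma2)))))
      \<longlonglongrightarrow> BW * log 2 (1 + (p 0 k * beta 0 k) / (1 / real tauc * dsum ?Psi K F1 + 1 / real tauc * dsum Phi K F4))"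
      by (rule lim_log) (use D1 D4 tc a0 in \<open>auto intro!: add_pos_pos divide_pos_pos\<close>)
    moreover have "\<And>M. I_spub Phi K tauc p q beta sigma2 k M =
        real M * (1 / real tauc * dsum ?Psi K F1 + 1 / real tauc * dsum Phi K F4) +
          (1 / real tauc ^ 2 * dsum Phi K (\<lambda>l i. p l i ^ 2 / q 0 k * beta l i ^ 2 / beta 0 k)
           + 1 / gamma_sp Phi K tauc p q beta sigma2 k *
             (dsum Phi K (\<lambda>l i. p l i * beta l i) + sigma2))"
      unfolding I_spub_def F1_def F4_def by (simp add: algebra_simps)
    ultimately show ?thesis unfolding R_spub_def Ra_spub_def F1_def F4_def by (simp add: ac_simps)
  qed
  have L3: "Ra_sp Phi K tauc p q beta BW k \<le> Ra_spub Phi K tauc p q beta BW k"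
  proof -
    have m1: "dsum ?Psi K F1 \<le> dsum ?Psi K F2"
    proof (rule dsum_mono[OF s1' s2'])
      fix l i assume "l \<in> ?Psi" "i \<in> {1..K}"
      then have "0 < p l i" "0 < q l i" "0 < beta l i" using P by auto
      then show "F1 l i \<le> F2 l i" unfolding F1_def F2_def using mono_terms(1) q0 b0 fac by blast
    qed
    have m2: "dsum Phi K F4 \<le> dsum Phi K F3"
    proof (rule dsum_mono[OF s4 s3])
      fix l i assume "l \<in> Phi" "i \<in> {1..K}"
      then have "0 < p l i" "0 < q l i" "0 < beta l i" using P by auto
      then show "F4 l i \<le> F3 l i" unfolding F3_def F4_def using mono_terms(2) q0 b0 fac by blast
    qed
    define u where "u = 1 / real tauc * dsum ?Psi K F1 + 1 / real tauc * dsum Phi K F4"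
    define v where "v = 1 / real tauc * dsum ?Psi K F2 + 1 / real tauc * dsum Phi K F3"
    have u0: "u > 0" unfolding u_def using D1 D4 tc by (simp add: add_pos_pos)
    have uv: "u \<le> v" unfolding u_def v_def using m1 m2 tc
      by (intro add_mono mult_left_mono) auto
    have "p 0 k * beta 0 k / v \<le> p 0 k * beta 0 k / u"
      by (rule divide_left_mono) (use a0 u0 uv in auto)
    hence "log 2 (1 + p 0 k * beta 0 k / v) \<le> log 2 (1 + p 0 k * beta 0 k / u)"
      using a0 u0 uv by (subst log_le_cancel_iff) (auto intro: add_pos_nonneg)
    hence "BW * log 2 (1 + p 0 k * beta 0 k / v) \<le> BW * log 2 (1 + p 0 k * beta 0 k / u)"
      using BW by simp
    then show ?thesis unfolding Ra_sp_def Ra_spub_def u_def v_def F1_def F2_def F3_def F4_def .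
  qed
  show ?thesis using L1 L2 L3 L4 by blast
qed

end
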